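(* Every Čech-complete (in particular, every compact) Tychonoff $\Delta$-space is scattered. Equivalently, if $X$ is Čech-complete and $C_p(X)$ is distinguished, then $X$ is scattered.
   Context: A Tychonoff space is Čech-complete if it is a $G_\delta$-subset of some (equivalently, every) compactification of it. A space $X$ is scattered if every nonempty subset $A\subseteq X$ has a point isolated in $A$. A topological space $X$ is a $\Delta$-space if for every decreasing sequence $\{D_n:n\in\omega\}$ of subsets of $X$ with $\bigcap_n D_n=\emptyset$ there is a decreasing sequence $\{V_n:n\in\omega\}$ of open subsets of $X$ with $D_n\subseteq V_n$ for all $n$ and $\bigcap_n V_n=\emptyset$. $C_p(X)$ is the space of continuous real-valued functions on $X$ with the pointwise convergence topology; a locally convex space is distinguished if its strong dual is barrelled. *)

theory Defs
  imports "HOL-Analysis.Analysis"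
begin

definition tychonoff_space :: "'a topology \<Rightarrow> bool" where
  "tychonoff_space X \<longleftrightarrow> completely_regular_space X \<and> Hausdorff_space X"

definition compactification :: "'a topology \<Rightarrow> 'b topology \<Rightarrow> ('a \<Rightarrow> 'b) \<Rightarrow> bool" where
  "compactification X K e \<longleftrightarrow>
     compact_space K \<and> Hausdorff_space K \<and> embedding_map X K e \<and>
     K closure_of (e ` topspace X) = topspace K"

definition scattered_space :: "'a topology \<Rightarrow> bool" where
  "scattered_space X \<longleftrightarrow>
     (\<forall>A. A \<subseteq> topspace X \<and> A \<noteq> {} \<longrightarrow>
        (\<exists>x\<in>A. \<exists>U. openin X U \<and> U \<inter> A = {x}))"

definition delta_space :: "'a topology \<Rightarrow> bool" where
  "delta_space X \<longleftrightarrow>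
     (\<forall>D :: nat \<Rightarrow> 'a set.
        (\<forall>n. D n \<subseteq> topspace X) \<and> (\<forall>n. D (Suc n) \<subseteq> D n) \<and> (\<Inter>n. D n) = {} \<longrightarrow>
        (\<exists>V :: nat \<Rightarrow> 'a set. (\<forall>n. openin X (V n)) \<and> (\<forall>n. V (Suc n) \<subseteq> V n) \<and>
             (\<forall>n. D n \<subseteq> V n) \<and> (\<Inter>n. V n) = {}))"

end

theory Submission
  imports Defs
begin

lemma split_lemma:
  fixes K :: "'b topology"
  assumes reg: "regular_space K" and hd: "Hausdorff_space K"
    and U: "openin K U" and G: "openin K G" and EG: "EA \<subseteq> G"
    and p: "p \<in> U \<inter> EA"
    and crowd: "\<And>p. p \<in> U \<inter> EA \<Longrightarrow> \<exists>q \<in> U \<inter> EA. q \<noteq> p"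
  shows "\<exists>W0 W1. openin K W0 \<and> openin K W1 \<and> W0 \<inter> EA \<noteq> {} \<and> W1 \<inter> EA \<noteq> {}
     \<and> K closure_of W0 \<subseteq> U \<inter> G \<and> K closure_of W1 \<subseteq> U \<inter> G
     \<and> K closure_of W0 \<inter> K closure_of W1 = {}"
proof -
  obtain q where q: "q \<in> U \<inter> EA" "q \<noteq> p" using crowd p by blast
  have pK: "p \<in> topspace K" "q \<in> topspace K" using p q U openin_subset by blast+
  obtain P0 P1 where P: "openin K P0" "openin K P1" "p \<in> P0" "q \<in> P1" "disjnt P0 P1"
    using hd pK q unfolding Hausdorff_space_def by metis
  have nb: "\<exists>W. openin K W \<and> x \<in> W \<and> K closure_of W \<subseteq> U \<inter> G \<inter> P"
    if "openin K P" "x \<in> P" "x \<in> U \<inter> EA" for P x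
  proof -
    let ?C = "topspace K - (U \<inter> G \<inter> P)"
    have "closedin K ?C" using U G that by blast
    moreover have "x \<in> topspace K - ?C" using that EG openin_subset[OF U] by auto
    ultimately obtain W where W: "openin K W" "x \<in> W" "disjnt ?C (K closure_of W)"
      using reg unfolding regular_space by blast
    have "K closure_of W \<subseteq> topspace K" by (rule closure_of_subset_topspace)
    with W(3) have "K closure_of W \<subseteq> U \<inter> G \<inter> P" by (auto simp: disjnt_iff)
    with W show ?thesis by blast
  qed
  obtain W0 where W0: "openin K W0" "p \<in> W0" "K closure_of W0 \<subseteq> U \<inter> G \<inter> P0"
    using nb[OF P(1) P(3) p] by blast
  obtain W1 where W1: "openin K W1" "q \<in> W1" "K closure_of W1 \<subseteq> U \<inter> G \<inter> P1"
    using nb[OF P(2) P(4) q(1)] by blast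
  show ?thesis
    apply (rule exI[of _ W0], rule exI[of _ W1])
    using W0 W1 p q P(5) by (auto simp: disjnt_iff)
qed

lemma tree_lemma:
  fixes K :: "'b topology"
  assumes reg: "regular_space K" and hd: "Hausdorff_space K"
    and G: "\<And>n. openin K (G n)" and EG: "\<And>n. EA \<subseteq> G n"
    and ne: "EA \<noteq> {}"
    and crowd0: "\<forall>U p. openin K U \<and> p \<in> U \<inter> EA \<longrightarrow> (\<exists>q \<in> U \<inter> EA. q \<noteq> p)"
  obtains W :: "(nat \<Rightarrow> bool) \<Rightarrow> nat \<Rightarrow> 'b set" where
     "\<And>b m. openin K (W b m)" "\<And>b m. W b m \<noteq> {}"
     "\<And>b m. K closure_of (W b (Suc m)) \<subseteq> W b m \<inter> G m"
     "\<And>b b' m. (\<forall>i<m. b i = b' i) \<Longrightarrow> W b m = W b' m"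
     "\<And>b b' m. (\<forall>i<m. b i = b' i) \<Longrightarrow> b m \<noteq> b' m \<Longrightarrow>
         K closure_of (W b (Suc m)) \<inter> K closure_of (W b' (Suc m)) = {}"
proof -
  have crowd: "\<exists>q \<in> U \<inter> EA. q \<noteq> p" if "openin K U" "p \<in> U \<inter> EA" for U p
    using crowd0 that by blast
  define Good where "Good U \<longleftrightarrow> openin K U \<and> U \<inter> EA \<noteq> {}" for U
  define Q where "Q U n p \<longleftrightarrow> Good (fst p) \<and> Good (snd p)
     \<and> K closure_of (fst p) \<subseteq> U \<inter> G n \<and> K closure_of (snd p) \<subseteq> U \<inter> G n
     \<and> K closure_of (fst p) \<inter> K closure_of (snd p) = {}" for U n p
  define SP where "SP U n = (SOME p. Q U n p)" for U n
  have SP: "Q U n (SP U n)" if "Good U" for U n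
  proof -
    from that have U: "openin K U" and ne: "U \<inter> EA \<noteq> {}" by (simp_all add: Good_def)
    from ne obtain p where p: "p \<in> U \<inter> EA" by (metis ex_in_conv)
    obtain W0 W1 where "openin K W0 \<and> openin K W1 \<and> W0 \<inter> EA \<noteq> {} \<and> W1 \<inter> EA \<noteq> {}
     \<and> K closure_of W0 \<subseteq> U \<inter> G n \<and> K closure_of W1 \<subseteq> U \<inter> G n
     \<and> K closure_of W0 \<inter> K closure_of W1 = {}"
      using split_lemma[where G="G n", OF reg hd U G EG p crowd[OF U]] by blast
    then have "Q U n (W0, W1)" unfolding Q_def Good_def by simp
    then show ?thesis unfolding SP_def by (rule someI)
  qed
  define W where "W b m = rec_nat (topspace K) (\<lambda>k Wk. (if b k then fst else snd) (SP Wk k)) m"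
    for b m
  have W0: "W b 0 = topspace K" for b by (simp add: W_def)
  have WS: "W b (Suc m) = (if b m then fst else snd) (SP (W b m) m)" for b m by (simp add: W_def)
  have good: "Good (W b m)" for b m
  proof (induction m)
    case 0
    have "EA \<subseteq> topspace K" using EG[of 0] openin_subset[OF G[of 0]] by blast
    then show ?case using ne by (auto simp: Good_def W0)
  next
    case (Suc m)
    then show ?case using SP[OF Suc, of m] unfolding Q_def by (simp add: WS)
  qed
  have agree: "(\<forall>i<m. b i = b' i) \<longrightarrow> W b m = W b' m" for b b' m
    by (induction m) (auto simp: W0 WS)
  show ?thesis
  proof (rule that[of W])
    fix b m show "openin K (W b m)" using good[of b m] by (simp add: Good_def)
  next
    fix b m show "W b m \<noteq> {}" using good[of b m] by (auto simp: Good_def)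
  next
    fix b m show "K closure_of W b (Suc m) \<subseteq> W b m \<inter> G m"
      using SP[OF good[of b m], of m] unfolding Q_def by (simp add: WS)
  next
    fix b b' :: "nat \<Rightarrow> bool" and m :: nat assume "\<forall>i<m. b i = b' i" then show "W b m = W b' m" using agree by blast
  next
    fix b b' :: "nat \<Rightarrow> bool" and m :: nat assume a1: "\<forall>i<m. b i = b' i" and a2: "b m \<noteq> b' m"
    then have "W b m = W b' m" using agree by blast
    moreover have "K closure_of (fst (SP (W b m) m)) \<inter> K closure_of (snd (SP (W b m) m)) = {}"
      using SP[OF good[of b m], of m] unfolding Q_def by blast
    ultimately show "K closure_of W b (Suc m) \<inter> K closure_of W b' (Suc m) = {}"
      using a2 by (cases "b m") (simp_all add: WS Int_commute)
  qed
qed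

theorem theorem3p4:
  fixes X :: "'a topology" and K :: "'b topology" and e :: "'a \<Rightarrow> 'b"
  assumes "tychonoff_space X"
    and "compactification X K e"
    and "gdelta_in K (e ` topspace X)"
    and "delta_space X"
  shows "scattered_space X"
proof (rule ccontr)
  assume nsc: "\<not> scattered_space X"
  have cK: "compact_space K" and hK: "Hausdorff_space K" and emb: "embedding_map X K e"
    using assms(2) unfolding compactification_def by auto
  have reg: "regular_space K" using cK hK by (rule compact_Hausdorff_imp_regular_space)
  have hom: "homeomorphic_map X (subtopology K (e ` topspace X)) e"
    using emb unfolding embedding_map_def .
  have cont: "continuous_map X K e"
    using homeomorphic_imp_continuous_map[OF hom] continuous_map_in_subtopology by blast
  have inj: "inj_on e (topspace X)" using homeomorphic_imp_injective_map[OF hom] .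
  have opentr: "\<exists>Op. openin K Op \<and> e ` V = Op \<inter> e ` topspace X" if "openin X V" for V
  proof -
    have "openin (subtopology K (e ` topspace X)) (e ` V)"
      using homeomorphic_map_openness[OF hom openin_subset[OF that]] that by simp
    then show ?thesis unfolding openin_subtopology by blast
  qed
  obtain T where T: "countable T" "T \<subseteq> Collect (openin K)" "\<Inter>T = e ` topspace X"
    and eK: "e ` topspace X \<subseteq> topspace K"
    using assms(3) unfolding gdelta_in_alt intersection_of_def by blast
  define T' where "T' = insert (topspace K) T"
  define G where "G = from_nat_into T'"
  have T'ne: "T' \<noteq> {}" "countable T'" using T(1) by (auto simp: T'_def)
  have Gopen: "openin K (G n)" for n
    using from_nat_into[OF T'ne(1), of n] T(2) by (auto simp: G_def T'_def)
  have Gint: "(\<Inter>n. G n) = e ` topspace X"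
  proof -
    have "(\<Inter>n. G n) = \<Inter>T'" unfolding G_def using range_from_nat_into[OF T'ne] by simp
    also have "\<dots> = e ` topspace X" using T(3) eK by (auto simp: T'_def)
    finally show ?thesis .
  qed
  obtain A where A: "A \<subseteq> topspace X" "A \<noteq> {}"
    and Anis: "\<And>x U. x \<in> A \<Longrightarrow> openin X U \<Longrightarrow> U \<inter> A \<noteq> {x}"
  proof -
    from nsc obtain A where "A \<subseteq> topspace X" "A \<noteq> {}"
      "\<not> (\<exists>x\<in>A. \<exists>U. openin X U \<and> U \<inter> A = {x})"
      unfolding scattered_space_def by meson
    then show ?thesis using that by meson
  qed
  define EA where "EA = e ` A"
  have EG: "EA \<subseteq> G n" for n using Gint A(1) by (auto simp: EA_def)
  have EAne: "EA \<noteq> {}" using A(2) by (simp add: EA_def)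
  have crowd: "\<exists>q \<in> U \<inter> EA. q \<noteq> p" if U: "openin K U" and p: "p \<in> U \<inter> EA" for U p
  proof -
    obtain a where a: "a \<in> A" "p = e a" using p by (auto simp: EA_def)
    define N where "N = {x \<in> topspace X. e x \<in> U}"
    have N: "openin X N" unfolding N_def by (rule openin_continuous_map_preimage[OF cont U])
    have "a \<in> N" using a p A(1) by (auto simp: N_def)
    with Anis[OF a(1) N] a(1) obtain a' where a': "a' \<in> N" "a' \<in> A" "a' \<noteq> a" by blast
    have "e a' \<noteq> e a" using inj a' a(1) A(1) by (auto simp: inj_on_def N_def)
    moreover have "e a' \<in> U \<inter> EA" using a' by (simp add: N_def EA_def)
    ultimately show ?thesis using a(2) by blast
  qed
  have crowd': "\<forall>U p. openin K U \<and> p \<in> U \<inter> EA \<longrightarrow> (\<exists>q \<in> U \<inter> EA. q \<noteq> p)"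
    using crowd by blast
  obtain W :: "(nat \<Rightarrow> bool) \<Rightarrow> nat \<Rightarrow> 'b set" where
     Wo: "\<And>b m. openin K (W b m)" and Wne: "\<And>b m. W b m \<noteq> {}"
     and Wcl: "\<And>b m. K closure_of (W b (Suc m)) \<subseteq> W b m \<inter> G m"
     and Wag: "\<And>b b' m. (\<forall>i<m. b i = b' i) \<Longrightarrow> W b m = W b' m"
     and Wdis: "\<And>b b' m. (\<forall>i<m. b i = b' i) \<Longrightarrow> b m \<noteq> b' m \<Longrightarrow>
         K closure_of (W b (Suc m)) \<inter> K closure_of (W b' (Suc m)) = {}"
    using tree_lemma[where K=K and G=G and EA=EA, OF reg hK Gopen EG EAne crowd'] by metis
  define cl where "cl b m = K closure_of (W b m)" for b m
  define P where "P b = (\<Inter>m. cl b m)" for b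
  have Wsub: "W b m \<subseteq> cl b m" for b m
    unfolding cl_def by (rule closure_of_subset[OF openin_subset[OF Wo]])
  have dec: "decseq (cl b)" for b
  proof (rule decseq_SucI)
    fix m show "cl b (Suc m) \<subseteq> cl b m" using Wcl[of b m] Wsub[of b m] by (auto simp: cl_def)
  qed
  have clne: "cl b m \<noteq> {}" for b m using Wsub[of b m] Wne[of b m] by blast
  have Pne: "P b \<noteq> {}" for b
    unfolding P_def by (rule compact_space_imp_nest[OF cK _ clne dec]) (simp add: cl_def)
  have PX: "P b \<subseteq> e ` topspace X" for b
  proof
    fix y assume "y \<in> P b"
    then have "y \<in> G m" for m using Wcl[of b m] by (auto simp: P_def cl_def)
    then show "y \<in> e ` topspace X" using Gint by blast
  qed
  have Pdis: "P b \<inter> P b' = {}" if bb: "b \<noteq> b'" for b b'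
  proof -
    obtain m where m: "b m \<noteq> b' m" "\<forall>i<m. b i = b' i"
    proof -
      have ex: "\<exists>i. b i \<noteq> b' i" using bb by auto
      let ?m = "LEAST i. b i \<noteq> b' i"
      show ?thesis
        by (rule that[of ?m]) (use LeastI_ex[OF ex] not_less_Least in auto)
    qed
    have "P b \<subseteq> cl b (Suc m)" "P b' \<subseteq> cl b' (Suc m)" by (auto simp: P_def)
    then show ?thesis using Wdis[OF m(2) m(1)] by (auto simp: cl_def)
  qed
  have Pcomp: "\<exists>m. cl b m \<subseteq> Op" if Op: "openin K Op" and sub: "P b \<subseteq> Op" for b Op
  proof (rule ccontr)
    assume "\<nexists>m. cl b m \<subseteq> Op"
    then have ne: "cl b m - Op \<noteq> {}" for m by blast
    have "(\<Inter>m. cl b m - Op) \<noteq> {}"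
    proof (rule compact_space_imp_nest[OF cK _ ne])
      fix m show "closedin K (cl b m - Op)" using Op by (auto simp: cl_def)
    next
      show "decseq (\<lambda>m. cl b m - Op)" using dec[of b] by (auto simp: decseq_def)
    qed
    then show False using sub by (auto simp: P_def)
  qed
  define B where "B n = {b :: nat \<Rightarrow> bool. \<exists>j\<ge>n. b j \<and> (\<forall>i>j. \<not> b i)}" for n
  define D where "D n = {x \<in> topspace X. \<exists>b\<in>B n. e x \<in> P b}" for n
  have Dsub: "\<forall>n. D n \<subseteq> topspace X" by (auto simp: D_def)
  have Ddec: "\<forall>n. D (Suc n) \<subseteq> D n" by (auto simp: D_def B_def) (meson Suc_leD)
  have Dint: "(\<Inter>n. D n) = {}"
  proof (rule ccontr)
    assume "(\<Inter>n. D n) \<noteq> {}"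
    then obtain x where x: "\<And>n. x \<in> D n" by blast
    obtain b j where b: "b j" "\<forall>i>j. \<not> b i" "e x \<in> P b" using x[of 0] by (auto simp: D_def B_def)
    obtain b' j' where b': "j' \<ge> Suc j" "b' j'" "e x \<in> P b'"
      using x[of "Suc j"] by (auto simp: D_def B_def)
    have "b \<noteq> b'" using b b' by (metis Suc_le_eq)
    then show False using Pdis b(3) b'(3) by blast
  qed
  have exV: "\<exists>V::nat \<Rightarrow> 'a set. (\<forall>n. openin X (V n)) \<and> (\<forall>n. V (Suc n) \<subseteq> V n) \<and>
             (\<forall>n. D n \<subseteq> V n) \<and> (\<Inter>n. V n) = {}"
    apply (rule mp[OF spec[OF assms(4)[unfolded delta_space_def], of D]])
    using Dsub Ddec Dint by (intro conjI)
  then obtain V where Vo: "\<forall>n. openin X (V n)" and Vdec: "\<forall>n. V (Suc n) \<subseteq> V n"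
      and DV: "\<forall>n. D n \<subseteq> V n" and Vint: "(\<Inter>n. V n) = {}"
    by (elim exE conjE)
  have opall: "\<forall>n. \<exists>Op. openin K Op \<and> e ` V n = Op \<inter> e ` topspace X"
    using opentr Vo by blast
  obtain Op where Op: "\<forall>n. openin K (Op n) \<and> e ` V n = Op n \<inter> e ` topspace X"
    using choice[OF opall] by (elim exE)
  have Oo: "\<And>n. openin K (Op n)" and OV: "\<And>n. e ` V n = Op n \<inter> e ` topspace X"
    using Op by simp_all
  have VO: "x \<in> V n" if "x \<in> topspace X" "e x \<in> Op n" for x n
  proof -
    have "e x \<in> e ` V n" using OV that by blast
    then obtain v where "v \<in> V n" "e v = e x" by (metis imageE)
    moreover have "v \<in> topspace X" using \<open>v \<in> V n\<close> openin_subset Vo by blast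
    ultimately show ?thesis using inj that(1) by (metis inj_on_def)
  qed
  have step: "\<exists>q. fst p < fst q \<and> (\<forall>i<fst p. snd q i = snd p i) \<and> cl (snd q) (fst q) \<subseteq> Op n"
    for p :: "nat \<times> (nat \<Rightarrow> bool)" and n
  proof -
    obtain m b where p: "p = (m, b)" by fastforce
    define b' where "b' i = (if i < m then b i else i = max m n)" for i
    have "b' \<in> B n" unfolding B_def b'_def by (rule CollectI, rule exI[of _ "max m n"]) auto
    have "P b' \<subseteq> Op n"
    proof
      fix y assume y: "y \<in> P b'"
      then obtain x where x: "x \<in> topspace X" "y = e x" using PX by blast
      then have "x \<in> D n" using y \<open>b' \<in> B n\<close> by (auto simp: D_def)
      then have "x \<in> V n" using DV by blast
      then show "y \<in> Op n" using OV x by blast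
    qed
    then obtain m0 where m0: "cl b' m0 \<subseteq> Op n" using Pcomp[OF Oo] by blast
    have "cl b' (max m0 (Suc m)) \<subseteq> cl b' m0" using dec[of b'] by (simp add: decseq_def)
    then show ?thesis using m0
      by (intro exI[of _ "(max m0 (Suc m), b')"]) (auto simp: p b'_def)
  qed
  obtain F where F: "\<And>p n. fst p < fst (F p n) \<and> (\<forall>i<fst p. snd (F p n) i = snd p i)
      \<and> cl (snd (F p n)) (fst (F p n)) \<subseteq> Op n"
    using step by metis
  define S where "S k = rec_nat (0, \<lambda>_. False) (\<lambda>k p. F p k) k" for k
  have S0: "S 0 = (0, \<lambda>_. False)" by (simp add: S_def)
  have SS: "S (Suc k) = F (S k) k" for k by (simp add: S_def)
  define mk where "mk k = fst (S k)" for k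
  define bk where "bk k = snd (S k)" for k
  have mk_inc: "mk k < mk (Suc k)" for k using F[of "S k" k] by (simp add: mk_def SS)
  have mk_ge: "k \<le> mk k" for k
  proof (induction k)
    case (Suc k) then show ?case using mk_inc[of k] by simp
  qed simp
  have bk_ag1: "\<forall>i<mk k. bk (Suc k) i = bk k i" for k
    using F[of "S k" k] by (simp add: mk_def bk_def SS)
  have bk_cl: "cl (bk (Suc k)) (mk (Suc k)) \<subseteq> Op k" for k
    using F[of "S k" k] by (simp add: mk_def bk_def SS)
  have mk_mono: "j \<le> k \<Longrightarrow> mk j \<le> mk k" for j k
    using mk_inc by (meson lift_Suc_mono_less_iff not_le order_less_imp_le)
  have bk_ag: "j \<le> k \<Longrightarrow> \<forall>i<mk j. bk k i = bk j i" for j k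
  proof (induction k)
    case 0 then show ?case by simp
  next
    case (Suc k)
    show ?case
    proof (cases "j = Suc k")
      case False
      then have "j \<le> k" using Suc.prems by simp
      then show ?thesis using Suc.IH bk_ag1[of k] mk_mono[of j k] by auto
    qed simp
  qed
  define c where "c i = bk (Suc i) i" for i
  have cag: "\<forall>i<mk (Suc k). c i = bk (Suc k) i" for k
  proof (intro allI impI)
    fix i assume i: "i < mk (Suc k)"
    show "c i = bk (Suc k) i"
    proof (cases "Suc i \<le> Suc k")
      case True
      have "i < mk (Suc i)" using mk_ge[of "Suc i"] by simp
      then show ?thesis using bk_ag[OF True] by (simp add: c_def)
    next
      case False
      then have "Suc k \<le> Suc i" by simp
      then show ?thesis using bk_ag[of "Suc k" "Suc i"] i by (simp add: c_def)
    qed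
  qed
  have eqcl: "cl c (mk (Suc k)) = cl (bk (Suc k)) (mk (Suc k))" for k
    using Wag[OF cag[of k]] by (simp add: cl_def)
  have PcO: "P c \<subseteq> Op k" for k
  proof
    fix y assume "y \<in> P c"
    then have "y \<in> cl c (mk (Suc k))" by (simp add: P_def)
    then show "y \<in> Op k" using eqcl[of k] bk_cl[of k] by auto
  qed
  obtain y where y: "y \<in> P c" using Pne by blast
  then obtain x where x: "x \<in> topspace X" "y = e x" using PX by blast
  have "e x \<in> Op k" for k using PcO[of k] y unfolding x(2) by (rule subsetD)
  then have xV: "x \<in> V k" for k using VO[OF x(1)] by simp
  have "x \<in> (\<Inter>n. V n)" using xV by simp
  then show False using Vint by simp
qed

end
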